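(* Let $K\ge 2$ be an even integer, let $M\ge K/2$ be an integer, and let $\tau>0$ and $p_{\max}>0$. Let $\beta_1,\ldots,\beta_K>0$ satisfy $\beta_j>\beta_i$ for all $j\in\mathcal{K}_c=\{1,\ldots,K/2\}$ and all $i\in\mathcal{K}_e=\{K/2+1,\ldots,K\}$. Set $\bar M=M+1-K/2$. For a power vector $\mathbf{p}=(p_1,\ldots,p_K)^T$ with $p_k\ge 0$ define $$R_k(\mathbf{p})=\tau\log_2\!\left(1+p_k\beta_k\bar M\right)\ \text{for } k\in\mathcal{K}_c,\qquad R_k(\mathbf{p})=\tau\log_2\!\left(1+\frac{p_k\beta_k}{p_{k-K/2}\beta_k+1}\right)\ \text{for } k\in\mathcal{K}_e.$$ Consider the problem of maximizing $\sum_{k=1}^K R_k(\mathbf{p})$ over $\mathbf{p}\succeq 0$ subject to $\sum_{k=1}^K p_k\le p_{\max}$. Then a feasible $\mathbf{p}$ is a maximizer only if $p_k=0$ for all $k\in\mathcal{K}_e$, and the maximum is attained by a power vector with $p_k=0$ for all $k\in\mathcal{K}_e$; i.e., the sum rate is maximized if and only if $p_k=0$ for all $k\in\mathcal{K}_e$ (together with an optimal allocation among the cell-center users).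
   Context: This models downlink power-domain NOMA with perfect CSI from an $M$-antenna base station to $K$ single-antenna users, split into $K/2$ cell-center users (indices $\mathcal{K}_c$) and $K/2$ cell-edge users (indices $\mathcal{K}_e$); users $k$ and $k+K/2$ form a group sharing a zero-forcing beam. $\beta_k$ is the large-scale fading coefficient of user $k$, $p_k$ its normalized transmit power, $\tau$ the fraction of the coherence interval used for data. The rate expressions above are the (perfect-CSI) rates assigned to cell-center users (after successive interference cancellation) and cell-edge users (treating the in-group cell-center signal as noise). *)

theory Defs
  imports Complex_Main
begin

text \<open>Users are indexed 1..K; cell-center users 1..K/2, cell-edge users K/2+1..K.
  Power vectors are functions nat => real; only indices 1..K matter.\<close>

definition center_users :: "nat \<Rightarrow> nat set" where
  "center_users K = {1..K div 2}"

definition edge_users :: "nat \<Rightarrow> nat set" where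
  "edge_users K = {K div 2 + 1..K}"

definition Mbar :: "nat \<Rightarrow> nat \<Rightarrow> real" where
  "Mbar K M = real M + 1 - real K / 2"

definition rate :: "nat \<Rightarrow> nat \<Rightarrow> real \<Rightarrow> (nat \<Rightarrow> real) \<Rightarrow> (nat \<Rightarrow> real) \<Rightarrow> nat \<Rightarrow> real" where
  "rate K M tau beta p k =
     (if k \<in> center_users K then tau * log 2 (1 + p k * beta k * Mbar K M)
      else tau * log 2 (1 + p k * beta k / (p (k - K div 2) * beta k + 1)))"

definition sum_rate :: "nat \<Rightarrow> nat \<Rightarrow> real \<Rightarrow> (nat \<Rightarrow> real) \<Rightarrow> (nat \<Rightarrow> real) \<Rightarrow> real" where
  "sum_rate K M tau beta p = (\<Sum>k=1..K. rate K M tau beta p k)"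

definition feasible :: "nat \<Rightarrow> real \<Rightarrow> (nat \<Rightarrow> real) \<Rightarrow> bool" where
  "feasible K pmax p \<longleftrightarrow> (\<forall>k\<in>{1..K}. 0 \<le> p k) \<and> (\<Sum>k=1..K. p k) \<le> pmax"

definition is_maximizer :: "nat \<Rightarrow> nat \<Rightarrow> real \<Rightarrow> real \<Rightarrow> (nat \<Rightarrow> real) \<Rightarrow> (nat \<Rightarrow> real) \<Rightarrow> bool" where
  "is_maximizer K M tau pmax beta p \<longleftrightarrow> feasible K pmax p \<and>
     (\<forall>q. feasible K pmax q \<longrightarrow> sum_rate K M tau beta q \<le> sum_rate K M tau beta p)"

end

theory Submission
  imports Defs "HOL-Analysis.Analysis"
begin

lemma pair_ineq:
  fixes a b x y :: real
  assumes "a > b" "b > 0" "x \<ge> 0" "y \<ge> 0"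
  shows "log 2 (1 + x * a) + log 2 (1 + y * b / (x * b + 1)) \<le> log 2 (1 + (x + y) * a)"
    and "y > 0 \<Longrightarrow> log 2 (1 + x * a) + log 2 (1 + y * b / (x * b + 1)) < log 2 (1 + (x + y) * a)"
proof -
  have p1: "1 + x * a > 0" using assms by (simp add: add_pos_nonneg)
  have p2: "x * b + 1 > 0" using assms by (simp add: add_nonneg_pos)
  have e: "1 + y * b / (x * b + 1) = (1 + x*b + y*b) / (x * b + 1)"
    using p2 by (simp add: field_simps)
  have p3: "1 + x*b + y*b > 0" using assms by (smt (verit) mult_nonneg_nonneg)
  have L: "log 2 (1 + x * a) + log 2 (1 + y * b / (x * b + 1))
        = log 2 ((1 + x * a) * (1 + x*b + y*b) / (x * b + 1))"
    using p1 p2 p3 by (simp add: e log_mult log_divide)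
  have key: "(1 + (x + y) * a) * (x*b+1) - (1 + x * a) * (1 + x*b + y*b) = y * (a - b)"
    by (simp add: algebra_simps)
  have pr: "(1 + x * a) * (1 + x*b + y*b) / (x * b + 1) > 0" using p1 p2 p3 by simp
  show "log 2 (1 + x * a) + log 2 (1 + y * b / (x * b + 1)) \<le> log 2 (1 + (x + y) * a)"
    unfolding L
  proof (subst log_le_cancel_iff)
    show "(1 + x * a) * (1 + x*b + y*b) / (x * b + 1) \<le> 1 + (x + y) * a"
      using p2 key assms by (simp add: divide_le_eq) (smt (verit) mult_nonneg_nonneg)
  qed (use pr p1 assms in \<open>auto intro: add_pos_nonneg mult_nonneg_nonneg\<close>)
  assume "y > 0"
  show "log 2 (1 + x * a) + log 2 (1 + y * b / (x * b + 1)) < log 2 (1 + (x + y) * a)"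
    unfolding L
  proof (subst log_less_cancel_iff)
    have "y * (a - b) > 0" using \<open>y>0\<close> assms by simp
    then show "(1 + x * a) * (1 + x*b + y*b) / (x * b + 1) < 1 + (x + y) * a"
      using p2 key by (simp add: divide_less_eq)
  qed (use pr p1 assms in \<open>auto intro: add_pos_nonneg mult_nonneg_nonneg\<close>)
qed

lemma sum_split_pairs:
  fixes f :: "nat \<Rightarrow> real"
  shows "(\<Sum>k=1..2*h. f k) = (\<Sum>j=1..h. f j + f (j + h))"
proof -
  have "{1..2*h} = {1..h} \<union> {h+1..h+h}" by auto
  then have "(\<Sum>k=1..2*h. f k) = (\<Sum>k=1..h. f k) + (\<Sum>k=1+h..h+h. f k)"
    by (simp add: sum.union_disjoint ivl_disj_int add.commute)
  also have "(\<Sum>k=1+h..h+h. f k) = (\<Sum>j=1..h. f (j+h))"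
    by (rule sum.shift_bounds_cl_nat_ivl)
  finally show ?thesis by (simp add: sum.distrib)
qed


theorem lemma1:
  fixes K M :: nat and tau pmax :: real and beta :: "nat \<Rightarrow> real"
  assumes "even K" and "K \<ge> 2" and "M \<ge> K div 2"
    and "tau > 0" and "pmax > 0"
    and "\<forall>k\<in>{1..K}. beta k > 0"
    and "\<forall>j\<in>center_users K. \<forall>i\<in>edge_users K. beta j > beta i"
  shows "(\<forall>p. is_maximizer K M tau pmax beta p \<longrightarrow> (\<forall>k\<in>edge_users K. p k = 0))
       \<and> (\<exists>p. is_maximizer K M tau pmax beta p \<and> (\<forall>k\<in>edge_users K. p k = 0))"
proof -
  obtain h where K2: "K = 2*h" using assms(1) by auto
  have hd: "K div 2 = h" using K2 by simp
  have h1: "h \<ge> 1" using assms(2) K2 by simp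
  have C: "center_users K = {1..h}" by (simp add: center_users_def hd)
  have E: "edge_users K = {h+1..2*h}" by (simp add: edge_users_def hd K2)
  have Mb: "Mbar K M \<ge> 1" using assms(3) unfolding Mbar_def hd K2 by simp
  define T where "T = (\<lambda>(p::nat\<Rightarrow>real) k. if k \<in> {1..h} then p k + p (k+h) else 0)"
  have sr: "sum_rate K M tau beta p = (\<Sum>j=1..h. rate K M tau beta p j + rate K M tau beta p (j+h))" for p
    unfolding sum_rate_def by (rule sum_split_pairs[of _ h, folded K2])
  have rc: "rate K M tau beta p j = tau * log 2 (1 + p j * beta j * Mbar K M)" if "j \<in> {1..h}" for p j
    using that by (simp add: rate_def C)
  have re: "rate K M tau beta p (j+h) = tau * log 2 (1 + p (j+h) * beta (j+h) / (p j * beta (j+h) + 1))"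
    if "j \<in> {1..h}" for p j
    using that by (simp add: rate_def C hd)
  have fsum: "(\<Sum>k=1..K. T p k) = (\<Sum>k=1..K. p k)" for p
    unfolding sum_split_pairs[of _ h, folded K2] by (rule sum.cong) (auto simp: T_def)
  have Tfeas: "feasible K pmax (T p)" if "feasible K pmax p" for p
    using that fsum unfolding feasible_def by (auto simp: T_def K2)
  have pairle: "rate K M tau beta p j + rate K M tau beta p (j+h) \<le> rate K M tau beta (T p) j + rate K M tau beta (T p) (j+h)"
    and pairlt: "p (j+h) > 0 \<Longrightarrow> rate K M tau beta p j + rate K M tau beta p (j+h) < rate K M tau beta (T p) j + rate K M tau beta (T p) (j+h)"
    if fp: "feasible K pmax p" and j: "j \<in> {1..h}" for p j
  proof -
    have bj: "beta j > beta (j+h)" using assms(7) j C E by auto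
    have bh: "beta (j+h) > 0" using assms(6) j K2 by auto
    have ab: "beta j * Mbar K M > beta (j+h)"
      using bj bh Mb by (smt (verit) mult_le_cancel_left1)
    have x0: "p j \<ge> 0" and y0: "p (j+h) \<ge> 0" using fp j K2 unfolding feasible_def by auto
    have Tj: "T p j = p j + p (j+h)" and Th: "T p (j+h) = 0" using j by (auto simp: T_def)
    have R: "rate K M tau beta (T p) j + rate K M tau beta (T p) (j+h) = tau * log 2 (1 + (p j + p (j+h)) * (beta j * Mbar K M))"
      using j by (simp add: rc re Tj Th mult.assoc)
    have L: "rate K M tau beta p j + rate K M tau beta p (j+h) = tau * (log 2 (1 + p j * (beta j * Mbar K M)) + log 2 (1 + p (j+h) * beta (j+h) / (p j * beta (j+h) + 1)))"
      using j by (simp add: rc re mult.assoc distrib_left)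
    show "rate K M tau beta p j + rate K M tau beta p (j+h) \<le> rate K M tau beta (T p) j + rate K M tau beta (T p) (j+h)"
      unfolding R L using pair_ineq(1)[OF ab bh x0 y0] assms(4) by simp
    assume "p (j+h) > 0"
    then show "rate K M tau beta p j + rate K M tau beta p (j+h) < rate K M tau beta (T p) j + rate K M tau beta (T p) (j+h)"
      unfolding R L using pair_ineq(2)[OF ab bh x0 y0] assms(4) by simp
  qed
  have Tle: "sum_rate K M tau beta p \<le> sum_rate K M tau beta (T p)" if "feasible K pmax p" for p
    unfolding sr by (rule sum_mono) (use pairle[OF that] in auto)
  have Tlt: "sum_rate K M tau beta p < sum_rate K M tau beta (T p)"
    if "feasible K pmax p" "k \<in> edge_users K" "p k \<noteq> 0" for p k
  proof -
    define j where "j = k - h"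
    have j: "j \<in> {1..h}" "k = j + h" using that(2) E unfolding j_def by auto
    have "p k \<ge> 0" using that(1,2) E K2 unfolding feasible_def by auto
    then have "p (j+h) > 0" using that(3) j by auto
    show ?thesis unfolding sr
      by (rule sum_strict_mono_ex1) (use pairle[OF that(1)] pairlt[OF that(1) j(1) \<open>p (j+h) > 0\<close>] j in auto)
  qed
  define S where "S = {p::nat\<Rightarrow>real. (\<forall>k. (k \<in> {1..h} \<longrightarrow> 0 \<le> p k \<and> p k \<le> pmax) \<and> (k \<notin> {1..h} \<longrightarrow> p k = 0)) \<and> (\<Sum>k=1..h. p k) \<le> pmax}"
  define B where "B = PiE UNIV (\<lambda>k. if k \<in> {1..h} then {0..pmax} else {0::real})"
  have "compactin (product_topology (\<lambda>i. euclidean) UNIV) B"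
    unfolding B_def by (subst compactin_PiE) auto
  then have cB: "compact B" by (simp add: euclidean_product_topology)
  have cl: "closed {p::nat\<Rightarrow>real. (\<Sum>k=1..h. p k) \<le> pmax}"
    by (intro closed_Collect_le continuous_on_sum continuous_on_const) simp
  have SB: "S = B \<inter> {p::nat\<Rightarrow>real. (\<Sum>k=1..h. p k) \<le> pmax}"
    unfolding S_def B_def by (auto simp: PiE_iff split: if_splits)
  have cS: "compact S" unfolding SB using cB cl by blast
  have S0: "(\<lambda>_. 0) \<in> S" unfolding S_def using assms(5) by auto
  have Snn: "p k \<ge> 0" if "p \<in> S" for p k
    using that unfolding S_def by (cases "k \<in> {1..h}") auto
  have cc: "continuous_on S (\<lambda>p::nat\<Rightarrow>real. p k)" for k
    by (rule continuous_on_subset[OF continuous_on_product_coordinates]) simp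
  have cont: "continuous_on S (sum_rate K M tau beta)"
    unfolding sum_rate_def
  proof (intro continuous_on_sum)
    fix k assume k: "k \<in> {1..K}"
    have bk: "beta k > 0" using k assms(6) by auto
    show "continuous_on S (\<lambda>p. rate K M tau beta p k)"
    proof (cases "k \<in> {1..h}")
      case True
      have "continuous_on S (\<lambda>p. tau * log 2 (1 + p k * beta k * Mbar K M))"
      proof -
        have pos: "\<forall>x\<in>S. 0 < 1 + x k * beta k * Mbar K M"
          using Snn bk Mb by (smt (verit) mult_nonneg_nonneg)
        show ?thesis by (intro continuous_intros cc pos) (use pos in force)+
      qed
      then show ?thesis using True by (simp add: rate_def C)
    next
      case False
      have "continuous_on S (\<lambda>p. tau * log 2 (1 + p k * beta k / (p (k - h) * beta k + 1)))"
      proof -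
        have pos: "\<forall>x\<in>S. 0 < 1 + x k * beta k / (x (k - h) * beta k + 1)"
          using Snn bk by (smt (verit) mult_nonneg_nonneg divide_nonneg_pos)
        have nz: "\<forall>x\<in>S. x (k - h) * beta k + 1 \<noteq> 0"
          using Snn bk by (smt (verit) mult_nonneg_nonneg)
        show ?thesis by (intro continuous_intros cc pos nz) (use pos nz in force)+
      qed
      then show ?thesis unfolding rate_def C hd if_not_P[OF False] .
    qed
  qed
  obtain p0 where p0S: "p0 \<in> S" and p0max: "\<forall>q\<in>S. sum_rate K M tau beta q \<le> sum_rate K M tau beta p0"
    using continuous_attains_sup[OF cS _ cont] S0 by blast
  have TS: "T q \<in> S" if fq: "feasible K pmax q" for q
  proof -
    have qnn: "q k \<ge> 0" if "k \<in> {1..K}" for k using fq that unfolding feasible_def by auto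
    have sT: "(\<Sum>k=1..h. T q k) = (\<Sum>k=1..K. q k)"
      unfolding sum_split_pairs[of _ h, folded K2] by (rule sum.cong) (auto simp: T_def)
    have sle: "(\<Sum>k=1..h. T q k) \<le> pmax" using sT fq unfolding feasible_def by simp
    have Tnn: "T q k \<ge> 0" for k using qnn K2 by (auto simp: T_def intro!: add_nonneg_nonneg)
    have "T q k \<le> pmax" if "k \<in> {1..h}" for k
    proof -
      have "T q k \<le> (\<Sum>k=1..h. T q k)" by (rule member_le_sum) (use that Tnn in auto)
      then show ?thesis using sle by simp
    qed
    moreover have "0 \<le> q k + q (k+h)" if "k \<in> {1..h}" for k
      using qnn that K2 by (intro add_nonneg_nonneg) auto
    ultimately have "\<forall>k. (k \<in> {1..h} \<longrightarrow> 0 \<le> T q k \<and> T q k \<le> pmax) \<and> (k \<notin> {1..h} \<longrightarrow> T q k = 0)"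
      by (simp add: T_def)
    then show ?thesis unfolding S_def using sle by blast
  qed
  have S1: "\<forall>k. k \<notin> {1..h} \<longrightarrow> p0 k = 0" using p0S unfolding S_def by blast
  have p0f: "feasible K pmax p0"
  proof -
    have S2: "(\<Sum>k=1..h. p0 k) \<le> pmax"
      using p0S unfolding S_def by blast+
    have z: "p0 (j + h) = 0" if "j \<in> {1..h}" for j using S1 that by simp
    have "(\<Sum>k=1..K. p0 k) = (\<Sum>k=1..h. p0 k)"
      unfolding sum_split_pairs[of _ h, folded K2] by (rule sum.cong) (simp_all add: z)
    then show ?thesis unfolding feasible_def using S2 Snn[OF p0S] by simp
  qed
  have p0m: "is_maximizer K M tau pmax beta p0"
    unfolding is_maximizer_def using p0f p0max TS Tle by (meson order_trans)
  have p0e: "\<forall>k\<in>edge_users K. p0 k = 0" using S1 unfolding E by simp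
  have part1: "\<forall>k\<in>edge_users K. p k = 0" if "is_maximizer K M tau pmax beta p" for p
  proof (rule ccontr)
    assume "\<not> (\<forall>k\<in>edge_users K. p k = 0)"
    then obtain k where "k \<in> edge_users K" "p k \<noteq> 0" by blast
    moreover have fp: "feasible K pmax p" using that unfolding is_maximizer_def by blast
    ultimately have "sum_rate K M tau beta p < sum_rate K M tau beta (T p)" using Tlt by blast
    moreover have "sum_rate K M tau beta (T p) \<le> sum_rate K M tau beta p"
      using that Tfeas[OF fp] unfolding is_maximizer_def by blast
    ultimately show False by simp
  qed
  show ?thesis using part1 p0m p0e by blast
qed

end
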